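(* Let $f:\mathbb{N}\to\mathbb{N}_{\ge 1}$ be an arithmetic function such that $f(n)=o(\log\log n)$ as $n\to\infty$. Then for Lebesgue-almost every irrational $\alpha\in(0,1)$, \[ \lim_{n\to\infty} S(\alpha,n,f(n))^{1/f(n)} = \infty. \]
   Context: Every irrational $\alpha\in(0,1)$ has a unique continued fraction expansion $\alpha = 1/(a_1(\alpha)+1/(a_2(\alpha)+\cdots))$ with digits $a_i(\alpha)\in\mathbb{N}_{\ge1}$. For $1\le k\le n$ integers, the $k$-th elementary symmetric mean of the first $n$ digits is \[ S(\alpha,n,k) := \binom{n}{k}^{-1}\sum_{1\le i_1<\cdots<i_k\le n} a_{i_1}(\alpha)\cdots a_{i_k}(\alpha). \] Convention: if $k=k(n)$ is not an integer, $S(\alpha,n,k)^{1/k}$ means $S(\alpha,n,\lceil k\rceil)^{1/\lceil k\rceil}$. *)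

theory Defs
  imports "HOL-Analysis.Analysis" "HOL-Library.Landau_Symbols"
begin

definition gauss_map :: "real \<Rightarrow> real" where
  "gauss_map x = frac (1 / x)"

text \<open>Continued fraction digit a_i(x), i >= 1: a_i(x) = floor(1 / T^(i-1)(x)).
  For irrational x in (0,1) these are exactly the digits of
  x = 1/(a_1 + 1/(a_2 + ...)).\<close>
definition cf_digit :: "real \<Rightarrow> nat \<Rightarrow> nat" where
  "cf_digit x i = nat \<lfloor>1 / (gauss_map ^^ (i - 1)) x\<rfloor>"

definition sym_mean :: "real \<Rightarrow> nat \<Rightarrow> nat \<Rightarrow> real" where
  "sym_mean x n k =
     (\<Sum>I\<in>{I. I \<subseteq> {1..n} \<and> card I = k}. \<Prod>i\<in>I. real (cf_digit x i)) / real (n choose k)"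

end

theory Submission
  imports Defs "HOL-Library.Log_Nat"
begin


lemma gauss_map_meas[measurable]: "gauss_map \<in> borel_measurable borel"
  unfolding gauss_map_def frac_def by measurable

lemma gauss_iter_meas[measurable]: "(gauss_map ^^ i) \<in> borel_measurable borel"
  by (induction i) (auto intro: measurable_compose)

lemma cfd_real_meas[measurable]: "(\<lambda>x. real (cf_digit x i)) \<in> borel_measurable borel"
proof -
  have "(\<lambda>x. real (cf_digit x i)) = (\<lambda>x. max 0 (real_of_int \<lfloor>1 / (gauss_map ^^ (i - 1)) x\<rfloor>))"
    by (auto simp: cf_digit_def fun_eq_iff)
  also have "\<dots> \<in> borel_measurable borel" by measurable
  finally show ?thesis .
qed

lemma cfd_meas[measurable]: "(\<lambda>x. cf_digit x i) \<in> borel \<rightarrow>\<^sub>M count_space UNIV"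
proof (subst measurable_count_space_eq2_countable, safe)
  fix a :: nat
  have "(\<lambda>x. cf_digit x i) -` {a} \<inter> space borel = {x. real (cf_digit x i) = real a}" by auto
  also have "\<dots> \<in> sets borel" by measurable
  finally show "(\<lambda>x. cf_digit x i) -` {a} \<inter> space borel \<in> sets borel" .
qed auto

lemma cfd_shift: "1 \<le> i \<Longrightarrow> cf_digit x (Suc i) = cf_digit (gauss_map x) i"
  unfolding cf_digit_def by (cases i) (simp_all add: funpow_swap1)


definition rho :: "real \<Rightarrow> real" where "rho x = 1 / (1 + x)"
definition ww :: "real \<Rightarrow> real" where "ww t = 1 / (t * (t + 1))"

lemma ww_meas[measurable]: "ww \<in> borel_measurable borel" unfolding ww_def by measurable

lemma rho_meas[measurable]: "rho \<in> borel_measurable borel" unfolding rho_def by measurable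

lemma branch:
  assumes "0 < x" "x < 1"
  shows "1 \<le> cf_digit x 1" "1 / (real (cf_digit x 1) + 1) \<le> x" "x \<le> 1 / real (cf_digit x 1)"
    "gauss_map x = frac (1/x)"
proof -
  have d: "cf_digit x 1 = nat \<lfloor>1/x\<rfloor>" by (simp add: cf_digit_def)
  have "1 < 1/x" using assms by simp
  then have f1: "1 \<le> \<lfloor>1/x\<rfloor>" by (simp add: le_floor_iff)
  then have "nat 1 \<le> nat \<lfloor>1/x\<rfloor>" by (rule nat_mono)
  then show "1 \<le> cf_digit x 1" unfolding d by simp
  have r: "real (cf_digit x 1) = of_int \<lfloor>1/x\<rfloor>" unfolding d using f1 assms by (subst of_nat_nat) auto
  have a: "of_int \<lfloor>1/x\<rfloor> \<le> 1/x" "1/x < of_int \<lfloor>1/x\<rfloor> + 1" by linarith+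
  have p: "(0::real) < of_int \<lfloor>1/x\<rfloor>" using f1 by simp
  show "1 / (real (cf_digit x 1) + 1) \<le> x" unfolding r
  proof -
    have "x * (1/x) < x * (of_int \<lfloor>1/x\<rfloor> + 1)" by (rule mult_strict_left_mono[OF a(2)]) (use assms in auto)
    then have "1 < x * (of_int \<lfloor>1/x\<rfloor> + 1)" using assms by simp
    moreover have h: "0 < b \<Longrightarrow> 1 < x * b \<Longrightarrow> 1 / b \<le> x" for b :: real
      by (simp add: divide_le_eq mult.commute)
    moreover have p': "(1::real) \<le> of_int \<lfloor>1/x\<rfloor>" using f1 by (metis of_int_1 of_int_le_iff)
    ultimately show "1 / (of_int \<lfloor>1/x\<rfloor> + 1) \<le> x" by (metis add_pos_pos zero_less_one less_le_trans)
  qed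
  show "x \<le> 1 / real (cf_digit x 1)" unfolding r
  proof -
    have "x * of_int \<lfloor>1/x\<rfloor> \<le> x * (1/x)" by (rule mult_left_mono[OF a(1)]) (use assms in auto)
    then have "x * of_int \<lfloor>1/x\<rfloor> \<le> 1" using assms by simp
    moreover have h: "0 < b \<Longrightarrow> x * b \<le> 1 \<Longrightarrow> x \<le> 1 / b" for b :: real
      by (simp add: le_divide_eq mult.commute)
    moreover have p': "(1::real) \<le> of_int \<lfloor>1/x\<rfloor>" using f1 by (metis of_int_1 of_int_le_iff)
    ultimately show "x \<le> 1 / of_int \<lfloor>1/x\<rfloor>" by (metis zero_less_one less_le_trans)
  qed
  show "gauss_map x = frac (1/x)" by (simp add: gauss_map_def)
qed

lemma frac_meas[measurable]: "(frac :: real \<Rightarrow> real) \<in> borel_measurable borel"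
proof -
  have "frac = (\<lambda>x::real. x - real_of_int \<lfloor>x\<rfloor>)" by (auto simp: frac_def)
  also have "\<dots> \<in> borel_measurable borel" by measurable
  finally show ?thesis .
qed

lemma frac_shift: "0 \<le> z \<Longrightarrow> z < 1 \<Longrightarrow> frac (real m + z) = z"
proof -
  assume z: "0 \<le> z" "z < 1"
  have "\<lfloor>real m + z\<rfloor> = int m" using z by (simp add: floor_eq_iff)
  then show ?thesis by (simp add: frac_def)
qed

lemma one_branch:
  fixes \<phi> :: "real \<Rightarrow> ennreal" and c :: real
  assumes [measurable]: "\<phi> \<in> borel_measurable borel" and c: "0 \<le> c"
  shows "(\<integral>\<^sup>+x. indicator {1 / (real k + 2)..1 / (real k + 1)} x * ennreal (c * rho x) * \<phi> (frac (1/x)) \<partial>lborel)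
     = (\<integral>\<^sup>+z. indicator {0..1} z * \<phi> z * ennreal (c * ww (Suc k + z)) \<partial>lborel)"
proof -
  define g where "g y = 1 / (real k + 2 - y)" for y
  define g' where "g' y = 1 / (real k + 2 - y)^2" for y
  define F where "F x = ennreal (c * rho x) * \<phi> (frac (1/x))" for x
  define H where "H y = indicator {0..1} y * \<phi> (frac (real k + 2 - y)) * ennreal (c * ww (real k + 2 - y))" for y
  have [measurable]: "F \<in> borel_measurable borel" unfolding F_def by measurable
  have [measurable]: "H \<in> borel_measurable borel" unfolding H_def by measurable
  have ga: "g 0 = 1 / (real k + 2)" and gb: "g 1 = 1 / (real k + 1)"
    by (simp_all add: g_def)
  have "(\<integral>\<^sup>+x. F x * indicator {g 0..g 1} x \<partial>lborel) = (\<integral>\<^sup>+x. F (g x) * g' x * indicator {0..1} x \<partial>lborel)"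
  proof (rule nn_integral_substitution_aux)
    show "\<And>x. x \<in> {0..1} \<Longrightarrow> (g has_real_derivative g' x) (at x)"
      unfolding g_def g'_def
      by (auto intro!: derivative_eq_intros simp: power2_eq_square field_simps)
    show "continuous_on {0..1} g'" unfolding g'_def
      by (intro continuous_intros) auto
    show "\<And>x. x \<in> {0..1} \<Longrightarrow> 0 \<le> g' x" unfolding g'_def by auto
  qed auto
  also have "\<dots> = (\<integral>\<^sup>+y. H y \<partial>lborel)"
  proof (rule nn_integral_cong)
    fix y :: real
    show "F (g y) * g' y * indicator {0..1} y = H y"
    proof (cases "y \<in> {0..1}")
      case True
      then have pos: "0 < real k + 2 - y" by auto
      have "rho (g y) * g' y = ww (real k + 2 - y)"
      proof -
        have *: "1 / (1 + 1 / t) * (1 / t^2) = 1 / (t * (t + 1))" if "0 < t" for t :: real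
          using that by (simp add: field_simps power2_eq_square)
        show ?thesis using *[OF pos] unfolding rho_def g_def g'_def ww_def .
      qed
      moreover have "0 \<le> rho (g y)" "0 \<le> g' y" using pos unfolding rho_def g_def g'_def by auto
      ultimately have e: "ennreal (c * rho (g y)) * ennreal (g' y) = ennreal (c * ww (real k + 2 - y))"
        using c by (simp add: ennreal_mult[symmetric] mult.assoc)
      have gi: "1 / g y = real k + 2 - y" by (simp add: g_def)
      have "F (g y) * g' y * indicator {0..1} y = \<phi> (frac (real k + 2 - y)) * (ennreal (c * rho (g y)) * ennreal (g' y))"
        unfolding F_def gi using True by (simp add: mult_ac)
      also have "\<dots> = \<phi> (frac (real k + 2 - y)) * ennreal (c * ww (real k + 2 - y))"
        by (simp only: e)
      also have "\<dots> = H y" unfolding H_def using True by simp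
      finally show ?thesis .
    qed (simp add: H_def)
  qed
  also have "\<dots> = (\<integral>\<^sup>+z. H (1 + (-1) * z) \<partial>lborel)"
    using nn_integral_real_affine[of H "-1" 1] by simp
  also have "\<dots> = (\<integral>\<^sup>+z. indicator {0..1} z * \<phi> z * ennreal (c * ww (Suc k + z)) \<partial>lborel)"
  proof (rule nn_integral_cong_AE)
    show "AE z in lborel. H (1 + (-1) * z) = indicator {0..1} z * \<phi> z * ennreal (c * ww (Suc k + z))"
      using AE_lborel_singleton[of 1]
    proof eventually_elim
      case (elim z)
      have eq: "real k + 2 - (1 + (-1) * z) = real (Suc k) + z" by simp
      show ?case
      proof (cases "z \<in> {0..1}")
        case True
        then have "0 \<le> z" "z < 1" using elim by auto
        then have fr: "frac (real (Suc k) + z) = z" by (rule frac_shift)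
        have ind: "indicator {0..1} (1 + (-1) * z) = (1::ennreal)" using True by (simp add: indicator_def)
        show ?thesis unfolding H_def eq fr ind using True by simp
      next
        case False
        then have "1 + (-1) * z \<notin> {0..1}" by auto
        then show ?thesis using False unfolding H_def by simp
      qed
    qed
  qed
  finally show ?thesis unfolding F_def ga gb by (simp add: mult_ac)
qed


lemma ww_tele: "0 < t \<Longrightarrow> ww t = 1 / t - 1 / (t + 1)"
  unfolding ww_def by (simp add: field_simps)

lemma ww_nonneg: "0 \<le> t \<Longrightarrow> 0 \<le> ww t" unfolding ww_def by simp

lemma ww_sums_shift: "0 \<le> z \<Longrightarrow> (\<lambda>k. ww (real k + a + z)) sums (1 / (a + z))" if "1 \<le> a" for a z :: real
proof -
  assume z: "0 \<le> z"
  define f where "f n = 1 / (real n + a + z)" for n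
  have "f \<longlonglongrightarrow> 0" unfolding f_def by real_asymp
  from telescope_sums'[OF this] have "(\<lambda>n. f n - f (Suc n)) sums (f 0 - 0)" .
  moreover have "f n - f (Suc n) = ww (real n + a + z)" for n
    using that z unfolding f_def by (subst ww_tele) (auto simp: algebra_simps)
  ultimately show ?thesis using that by (simp add: f_def)
qed

lemma ww_sums: "0 \<le> z \<Longrightarrow> (\<lambda>k. ww (real (Suc k) + z)) sums (1 / (1 + z))"
  using ww_sums_shift[of 1 z] by (simp add: add.commute add.left_commute)

lemma TL:
  fixes \<phi> :: "real \<Rightarrow> ennreal" and u :: "nat \<Rightarrow> real"
  assumes [measurable]: "\<phi> \<in> borel_measurable borel" and u0: "\<And>k. 0 \<le> u k" and u1: "\<And>k. u k \<le> 1"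
  shows "(\<integral>\<^sup>+x. indicator {0<..<1} x * ennreal (rho x * u (cf_digit x 1)) * \<phi> (gauss_map x) \<partial>lborel)
     \<le> (\<integral>\<^sup>+z. indicator {0..1} z * \<phi> z * ennreal (\<Sum>k. u (Suc k) * ww (real (Suc k) + z)) \<partial>lborel)"
proof -
  define T where "T k x = indicator {1 / (real k + 2)..1 / (real k + 1)} x * ennreal (u (Suc k) * rho x) * \<phi> (frac (1/x))" for k x
  have [measurable]: "T k \<in> borel_measurable borel" for k unfolding T_def frac_def by measurable
  have "(\<integral>\<^sup>+x. indicator {0<..<1} x * ennreal (rho x * u (cf_digit x 1)) * \<phi> (gauss_map x) \<partial>lborel)
      \<le> (\<integral>\<^sup>+x. (\<Sum>k. T k x) \<partial>lborel)"
  proof (rule nn_integral_mono)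
    fix x :: real
    show "indicator {0<..<1} x * ennreal (rho x * u (cf_digit x 1)) * \<phi> (gauss_map x) \<le> (\<Sum>k. T k x)"
    proof (cases "x \<in> {0<..<1}")
      case True
      then have x: "0 < x" "x < 1" by auto
      note br = branch[OF x]
      define k where "k = cf_digit x 1 - 1"
      have sk: "Suc k = cf_digit x 1" using br(1) unfolding k_def by simp
      have r1: "real k + 1 = real (cf_digit x 1)" and r2: "real k + 2 = real (cf_digit x 1) + 1"
        using sk by (simp_all flip: sk)
      have "indicator {0<..<1} x * ennreal (rho x * u (cf_digit x 1)) * \<phi> (gauss_map x) = T k x"
      proof -
        have "real (cf_digit x 1) + 1 = real k + 2" using r1 by simp
        then have "x \<in> {1 / (real k + 2)..1 / (real k + 1)}" using br(2,3) r1 by (simp add: add.commute)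
        then show ?thesis unfolding T_def using True br(4) sk by (simp add: mult_ac)
      qed
      also have "\<dots> \<le> (\<Sum>k. T k x)"
        using sum_le_suminf[OF summableI, of "{k}" "\<lambda>k. T k x"] by simp
      finally show ?thesis .
    qed simp
  qed
  also have "\<dots> = (\<Sum>k. \<integral>\<^sup>+x. T k x \<partial>lborel)"
    by (rule nn_integral_suminf) measurable
  also have "\<dots> = (\<Sum>k. \<integral>\<^sup>+z. indicator {0..1} z * \<phi> z * ennreal (u (Suc k) * ww (real (Suc k) + z)) \<partial>lborel)"
    unfolding T_def by (subst one_branch) (auto simp: u0)
  also have "\<dots> = (\<integral>\<^sup>+z. (\<Sum>k. indicator {0..1} z * \<phi> z * ennreal (u (Suc k) * ww (real (Suc k) + z))) \<partial>lborel)"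
    by (rule nn_integral_suminf[symmetric]) measurable
  also have "\<dots> = (\<integral>\<^sup>+z. indicator {0..1} z * \<phi> z * ennreal (\<Sum>k. u (Suc k) * ww (real (Suc k) + z)) \<partial>lborel)"
  proof (rule nn_integral_cong)
    fix z :: real
    show "(\<Sum>k. indicator {0..1} z * \<phi> z * ennreal (u (Suc k) * ww (real (Suc k) + z))) =
        indicator {0..1} z * \<phi> z * ennreal (\<Sum>k. u (Suc k) * ww (real (Suc k) + z))"
    proof (cases "z \<in> {0..1}")
      case True
      then have z: "0 \<le> z" by auto
      have nn: "0 \<le> u (Suc k) * ww (real (Suc k) + z)" for k using u0 ww_nonneg z by simp
      have "summable (\<lambda>k. u (Suc k) * ww (real (Suc k) + z))"
      proof (rule summable_comparison_test[OF _ sums_summable[OF ww_sums[OF z]]])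
        show "\<exists>N. \<forall>n\<ge>N. norm (u (Suc n) * ww (real (Suc n) + z)) \<le> ww (real (Suc n) + z)"
          using nn u0 u1 ww_nonneg z by (auto intro!: exI[of _ 0] mult_left_le_one_le)
      qed
      note sm = this
      show ?thesis
        using ennreal_suminf_cmult[of "indicator {0..1} z * \<phi> z" "\<lambda>k. ennreal (u (Suc k) * ww (real (Suc k) + z))"]
          suminf_ennreal2[OF nn sm] by simp
    qed simp
  qed
  finally show ?thesis .
qed


lemma base_int: "(\<integral>\<^sup>+x. indicator {0<..<1} x * ennreal (rho x) \<partial>lborel) \<le> 1"
proof -
  have "(\<integral>\<^sup>+x. indicator {0<..<1} x * ennreal (rho x) \<partial>lborel) \<le> (\<integral>\<^sup>+(x::real). indicator {0<..<1} x \<partial>lborel)"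
    by (intro nn_integral_mono) (auto simp: indicator_def rho_def)
  also have "\<dots> = 1" by simp
  finally show ?thesis .
qed

lemma prod_shift_split:
  "(\<Prod>i\<in>{1..Suc N}. h i) = h 1 * (\<Prod>i\<in>{1..N}. h (Suc i))" for h :: "nat \<Rightarrow> 'a::comm_monoid_mult"
proof -
  have "(\<Prod>i\<in>{1..Suc N}. h i) = (\<Prod>i\<in>{0..N}. h (Suc i))"
    using prod.atLeast_Suc_atMost_Suc_shift[of h 0 N] by simp
  also have "\<dots> = h 1 * (\<Prod>i\<in>{Suc 0..N}. h (Suc i))"
    by (subst prod.atLeast_Suc_atMost) auto
  finally show ?thesis by simp
qed

lemma IT:
  "\<And>U c. (\<And>i k. 0 \<le> U i k) \<Longrightarrow> (\<And>i k. U i k \<le> 1) \<Longrightarrow> (\<And>i. 0 \<le> c i) \<Longrightarrow>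
    (\<And>i z. 0 \<le> z \<Longrightarrow> z \<le> 1 \<Longrightarrow> (\<Sum>k. U i (Suc k) * ww (real (Suc k) + z)) \<le> c i * rho z) \<Longrightarrow>
    (\<integral>\<^sup>+x. indicator {0<..<1} x * ennreal (rho x * (\<Prod>i\<in>{1..N}. U i (cf_digit x i))) \<partial>lborel)
       \<le> ennreal (\<Prod>i\<in>{1..N}. c i)"
proof (induction N)
  case 0
  then show ?case using base_int by simp
next
  case (Suc N U c)
  define V where "V i = U (Suc i)" for i
  define \<Phi> where "\<Phi> y = ennreal (\<Prod>i\<in>{1..N}. V i (cf_digit y i))" for y
  have [measurable]: "\<Phi> \<in> borel_measurable borel" unfolding \<Phi>_def by measurable
  have Vp: "0 \<le> V i k" "V i k \<le> 1" for i k using Suc.prems unfolding V_def by auto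
  have prodnn: "0 \<le> (\<Prod>i\<in>{1..N}. V i (cf_digit y i))" for y using Vp by (simp add: prod_nonneg)
  have eq: "indicator {0<..<1} x * ennreal (rho x * (\<Prod>i\<in>{1..Suc N}. U i (cf_digit x i)))
      = indicator {0<..<1} x * ennreal (rho x * U 1 (cf_digit x 1)) * \<Phi> (gauss_map x)" for x
  proof (cases "x \<in> {0<..<1}")
    case True
    then have rp: "0 \<le> rho x" by (simp add: rho_def)
    have "(\<Prod>i\<in>{1..Suc N}. U i (cf_digit x i)) = U 1 (cf_digit x 1) * (\<Prod>i\<in>{1..N}. V i (cf_digit (gauss_map x) i))"
      unfolding prod_shift_split V_def using cfd_shift by (auto intro!: prod.cong)
    then show ?thesis unfolding \<Phi>_def using rp Suc.prems(1) prodnn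
      by (simp add: ennreal_mult'' mult.assoc)
  qed simp
  have "(\<integral>\<^sup>+x. indicator {0<..<1} x * ennreal (rho x * (\<Prod>i\<in>{1..Suc N}. U i (cf_digit x i))) \<partial>lborel)
      = (\<integral>\<^sup>+x. indicator {0<..<1} x * ennreal (rho x * U 1 (cf_digit x 1)) * \<Phi> (gauss_map x) \<partial>lborel)"
    by (simp only: eq)
  also have "\<dots> \<le> (\<integral>\<^sup>+z. indicator {0..1} z * \<Phi> z * ennreal (\<Sum>k. U 1 (Suc k) * ww (real (Suc k) + z)) \<partial>lborel)"
    by (rule TL) (use Suc.prems in auto)
  also have "\<dots> \<le> (\<integral>\<^sup>+z. ennreal (c 1) * (indicator {0<..<1} z * ennreal (rho z * (\<Prod>i\<in>{1..N}. V i (cf_digit z i)))) \<partial>lborel)"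
  proof (rule nn_integral_mono_AE)
    show "AE z in lborel. indicator {0..1} z * \<Phi> z * ennreal (\<Sum>k. U 1 (Suc k) * ww (real (Suc k) + z))
        \<le> ennreal (c 1) * (indicator {0<..<1} z * ennreal (rho z * (\<Prod>i\<in>{1..N}. V i (cf_digit z i))))"
      using AE_lborel_singleton[of 0] AE_lborel_singleton[of 1]
    proof eventually_elim
      case (elim z)
      show ?case
      proof (cases "z \<in> {0<..<1}")
        case True
        have rp: "0 \<le> rho z" using True by (simp add: rho_def)
        have "ennreal (\<Sum>k. U 1 (Suc k) * ww (real (Suc k) + z)) \<le> ennreal (c 1 * rho z)"
          using Suc.prems(4)[of z 1] True by (auto intro: ennreal_leI)
        then have "\<Phi> z * ennreal (\<Sum>k. U 1 (Suc k) * ww (real (Suc k) + z)) \<le> \<Phi> z * ennreal (c 1 * rho z)"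
          by (rule mult_left_mono) simp
        also have "\<dots> = ennreal (c 1) * ennreal (rho z * (\<Prod>i\<in>{1..N}. V i (cf_digit z i)))"
          unfolding \<Phi>_def using rp prodnn Suc.prems(3)[of 1]
          by (simp add: ennreal_mult'' ennreal_mult mult_ac)
        finally show ?thesis using True by simp
      next
        case False
        then have "z \<notin> {0..1}" using elim by auto
        then show ?thesis using False by simp
      qed
    qed
  qed
  also have "\<dots> = ennreal (c 1) * (\<integral>\<^sup>+z. indicator {0<..<1} z * ennreal (rho z * (\<Prod>i\<in>{1..N}. V i (cf_digit z i))) \<partial>lborel)"
    by (rule nn_integral_cmult) measurable
  also have "\<dots> \<le> ennreal (c 1) * ennreal (\<Prod>i\<in>{1..N}. c (Suc i))"
    by (intro mult_left_mono Suc.IH) (use Suc.prems Vp in \<open>auto simp: V_def\<close>)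
  also have "\<dots> = ennreal (\<Prod>i\<in>{1..Suc N}. c i)"
    unfolding prod_shift_split using Suc.prems(3) by (simp add: ennreal_mult prod_nonneg)
  finally show ?case .
qed


lemma ww_sums_tail:
  assumes "1 \<le> M" "0 \<le> z"
  shows "(\<lambda>k. if M \<le> Suc k then ww (real (Suc k) + z) else 0) sums (1 / (real M + z))"
proof -
  have "(\<lambda>i. (\<lambda>k. if M \<le> Suc k then ww (real (Suc k) + z) else 0) (i + (M - 1))) sums (1 / (real M + z))"
  proof -
    have "(\<lambda>k. ww (real k + real M + z)) sums (1 / (real M + z))"
      using ww_sums_shift[of "real M" z] assms by simp
    moreover have "(\<lambda>k. if M \<le> Suc k then ww (real (Suc k) + z) else 0) (i + (M - 1)) = ww (real i + real M + z)" for i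
      using assms by (simp add: of_nat_diff algebra_simps)
    ultimately show ?thesis by simp
  qed
  then show ?thesis
    by (subst (asm) sums_zero_iff_shift) (use assms in auto)
qed

lemma U_bound:
  assumes "1 \<le> M" "0 \<le> z" "z \<le> 1"
  shows "(\<Sum>k. (if M \<le> Suc k then 1/2 else 1) * ww (real (Suc k) + z)) \<le> (1 - 1 / (2 * real M)) * rho z"
proof -
  have s1: "(\<lambda>k. ww (real (Suc k) + z)) sums (1 / (1 + z))" using ww_sums assms by simp
  have s2: "(\<lambda>k. (1/2) * (if M \<le> Suc k then ww (real (Suc k) + z) else 0)) sums ((1/2) * (1 / (real M + z)))"
    by (rule sums_mult[OF ww_sums_tail[OF assms(1,2)]])
  have "(\<lambda>k. ww (real (Suc k) + z) - (1/2) * (if M \<le> Suc k then ww (real (Suc k) + z) else 0)) sums (1 / (1 + z) - (1/2) * (1 / (real M + z)))"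
    by (rule sums_diff[OF s1 s2])
  moreover have "(\<lambda>k. ww (real (Suc k) + z) - (1/2) * (if M \<le> Suc k then ww (real (Suc k) + z) else 0)) =
      (\<lambda>k. (if M \<le> Suc k then 1/2 else 1) * ww (real (Suc k) + z))" by (auto simp: fun_eq_iff)
  ultimately have "(\<Sum>k. (if M \<le> Suc k then 1/2 else 1) * ww (real (Suc k) + z)) = 1 / (1 + z) - (1/2) * (1 / (real M + z))"
    by (simp add: sums_iff)
  also have "\<dots> \<le> (1 - 1 / (2 * real M)) * rho z"
  proof -
    have M: "(1::real) \<le> real M" using assms by simp
    have "z * 1 \<le> z * real M" using M assms by (intro mult_left_mono) auto
    then have d1: "2 * (real M + z) \<le> 2 * real M * (1 + z)" by (simp add: algebra_simps)
    have "0 < 2 * real M * (1 + z) * (2 * (real M + z))" using M assms by (intro mult_pos_pos) auto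
    then have "1 / (2 * real M * (1 + z)) \<le> 1 / (2 * (real M + z))"
      by (intro divide_left_mono d1) auto
    moreover have "(1 - 1 / (2 * real M)) * rho z = 1 / (1 + z) - 1 / (2 * real M * (1 + z))"
    proof -
      have h: "(1 - 1/a)*(1/b) = 1/b - 1/(a*b)" if "a \<noteq> 0" "b \<noteq> 0" for a b :: real
        using that by (simp add: field_simps)
      show ?thesis unfolding rho_def by (rule h) (use M assms in auto)
    qed
    ultimately show ?thesis by simp
  qed
  finally show ?thesis .
qed

lemma one_sum: "0 \<le> z \<Longrightarrow> (\<Sum>k. 1 * ww (real (Suc k) + z)) = rho z"
  using ww_sums[of z] unfolding rho_def by (simp add: sums_iff)

definition cnt :: "real \<Rightarrow> nat set \<Rightarrow> nat \<Rightarrow> nat" where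
  "cnt x B M = card {i\<in>B. M \<le> cf_digit x i}"

lemma markov:
  assumes B: "B \<subseteq> {1..N}" and M: "1 \<le> M"
  shows "emeasure lborel {x\<in>{0<..<1}. cnt x B M < m} \<le> ennreal (2 * 2^m * (1 - 1 / (2 * real M)) ^ card B)"
proof -
  define U where "U i k = (if i \<in> B \<and> M \<le> k then 1/2 else (1::real))" for i k
  define c where "c i = (if i \<in> B then 1 - 1 / (2 * real M) else (1::real))" for i
  have fin: "finite B" using B finite_subset by blast
  have IT': "(\<integral>\<^sup>+x. indicator {0<..<1} x * ennreal (rho x * (\<Prod>i\<in>{1..N}. U i (cf_digit x i))) \<partial>lborel)
       \<le> ennreal (\<Prod>i\<in>{1..N}. c i)"
  proof (rule IT)
    show "0 \<le> U i k" "U i k \<le> 1" for i k by (auto simp: U_def)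
    show "0 \<le> c i" for i using M by (auto simp: c_def field_simps)
    show "(\<Sum>k. U i (Suc k) * ww (real (Suc k) + z)) \<le> c i * rho z" if "0 \<le> z" "z \<le> 1" for i z
    proof (cases "i \<in> B")
      case True
      then show ?thesis using U_bound[OF M that] by (simp add: U_def c_def)
    next
      case False
      then show ?thesis using one_sum[OF that(1)] by (simp add: U_def c_def)
    qed
  qed
  have cprod: "(\<Prod>i\<in>{1..N}. c i) = (1 - 1 / (2 * real M)) ^ card B"
  proof -
    have "(\<Prod>i\<in>{1..N}. c i) = (\<Prod>i\<in>{i\<in>{1..N}. i \<in> B}. 1 - 1 / (2 * real M))"
      unfolding c_def by (subst prod.inter_filter) auto
    also have "{i\<in>{1..N}. i \<in> B} = B" using B by auto
    finally show ?thesis by simp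
  qed
  define S where "S = {x\<in>{0<..<1}. cnt x B M < m}"
  have Seq: "S = {x\<in>{0<..<1}. (\<Sum>i\<in>B. if M \<le> cf_digit x i then 1 else 0::real) < real m}"
  proof -
    have "real (cnt x B M) = (\<Sum>i\<in>B. if M \<le> cf_digit x i then 1 else 0::real)" for x
      unfolding cnt_def real_of_card using fin by (subst sum.inter_filter) auto
    then show ?thesis unfolding S_def by (metis (no_types, lifting) of_nat_less_iff)
  qed
  have Smeas[measurable]: "S \<in> sets lborel" unfolding Seq by measurable
  have "emeasure lborel S = (\<integral>\<^sup>+x. indicator S x \<partial>lborel)"
    by (rule nn_integral_indicator[symmetric]) (rule Smeas)
  also have "\<dots> \<le> (\<integral>\<^sup>+x. ennreal (2 * 2^m) * (indicator {0<..<1} x * ennreal (rho x * (\<Prod>i\<in>{1..N}. U i (cf_digit x i)))) \<partial>lborel)"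
  proof (rule nn_integral_mono)
    fix x
    show "indicator S x \<le> ennreal (2 * 2^m) * (indicator {0<..<1} x * ennreal (rho x * (\<Prod>i\<in>{1..N}. U i (cf_digit x i))))"
    proof (cases "x \<in> S")
      case True
      then have x: "0 < x" "x < 1" and cm: "cnt x B M < m" unfolding S_def by auto
      have "(\<Prod>i\<in>{1..N}. U i (cf_digit x i)) = (\<Prod>i\<in>{i\<in>{1..N}. i \<in> B \<and> M \<le> cf_digit x i}. 1/2)"
        unfolding U_def by (subst prod.inter_filter) auto
      also have "{i\<in>{1..N}. i \<in> B \<and> M \<le> cf_digit x i} = {i\<in>B. M \<le> cf_digit x i}" using B by auto
      finally have pe: "(\<Prod>i\<in>{1..N}. U i (cf_digit x i)) = (1/2) ^ cnt x B M" by (simp add: cnt_def)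
      have r: "1/2 \<le> rho x" using x unfolding rho_def by (simp add: field_simps)
      have "(1::real) \<le> 2 ^ m * (1/2) ^ cnt x B M"
      proof -
        have "(2::real) ^ cnt x B M \<le> 2 ^ m" using cm by (intro power_increasing) auto
        then show ?thesis by (simp add: power_one_over field_simps)
      qed
      also have "\<dots> \<le> 2 * 2 ^ m * (rho x * (1/2) ^ cnt x B M)"
        using r by (simp add: mult_le_cancel_left1 field_simps)
      finally have "1 \<le> 2 * 2 ^ m * (rho x * (\<Prod>i\<in>{1..N}. U i (cf_digit x i)))" unfolding pe .
      then have "ennreal 1 \<le> ennreal (2 * 2 ^ m * (rho x * (\<Prod>i\<in>{1..N}. U i (cf_digit x i))))"
        by (rule ennreal_leI)
      moreover have "0 \<le> rho x * (\<Prod>i\<in>{1..N}. U i (cf_digit x i))"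
        using r pe by simp
      ultimately have "1 \<le> ennreal (2 * 2 ^ m) * ennreal (rho x * (\<Prod>i\<in>{1..N}. U i (cf_digit x i)))"
        by (simp add: ennreal_mult[symmetric])
      then show ?thesis using True x by simp
    qed simp
  qed
  also have "\<dots> = ennreal (2 * 2^m) * (\<integral>\<^sup>+x. indicator {0<..<1} x * ennreal (rho x * (\<Prod>i\<in>{1..N}. U i (cf_digit x i))) \<partial>lborel)"
    by (rule nn_integral_cmult) (unfold U_def, measurable)
  also have "\<dots> \<le> ennreal (2 * 2^m) * ennreal ((1 - 1 / (2 * real M)) ^ card B)"
    using IT' cprod by (intro mult_left_mono) auto
  also have "\<dots> = ennreal (2 * 2^m * (1 - 1 / (2 * real M)) ^ card B)"
    using M by (simp add: ennreal_mult[symmetric] field_simps)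
  finally show ?thesis unfolding S_def .
qed


definition DD :: "nat \<Rightarrow> nat" where "DD j = j div 8"
definition blk :: "nat \<Rightarrow> nat \<Rightarrow> nat set" where "blk l t = {t*l+1..t*l+l}"
definition bad :: "nat \<Rightarrow> nat \<Rightarrow> nat \<Rightarrow> nat \<Rightarrow> real set" where
  "bad j r t s = {x\<in>{0<..<1}. cnt x (blk (2^(j-r)) t) (2^s) < 2^(j-r) div 2^(s+3)}"
definition Idx :: "nat \<Rightarrow> (nat \<times> nat \<times> nat) set" where
  "Idx j = {(r,t,s). r < DD j \<and> t < 2^r \<and> s \<in> {1..DD j}}"
definition EE :: "nat \<Rightarrow> real set" where
  "EE j = (\<Union>(r,t,s)\<in>Idx j. bad j r t s)"

lemma card_blk[simp]: "card (blk l t) = l" by (simp add: blk_def)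

lemma bad_meas[measurable]: "bad j r t s \<in> sets lborel"
proof -
  define B where "B = blk (2^(j-r)) t"
  have "bad j r t s = {x\<in>{0<..<1}. (\<Sum>i\<in>B. if 2^s \<le> cf_digit x i then 1 else 0::real) < real (2^(j-r) div 2^(s+3))}"
  proof -
    have fin: "finite B" by (simp add: B_def blk_def)
    have "real (cnt x B (2^s)) = (\<Sum>i\<in>B. if 2^s \<le> cf_digit x i then 1 else 0::real)" for x
      unfolding cnt_def real_of_card using fin by (subst sum.inter_filter) auto
    then show ?thesis unfolding bad_def B_def[symmetric] by (metis (no_types, lifting) of_nat_less_iff)
  qed
  also have "\<dots> \<in> sets lborel" by measurable
  finally show ?thesis .
qed

lemma pow_exp_bound:
  assumes "1 \<le> M"
  shows "(1 - 1 / (2 * real M)) ^ l \<le> exp (- (real l / (2 * real M)))"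
proof -
  have "(1 - 1 / (2 * real M)) ^ l \<le> exp (- (1 / (2 * real M))) ^ l"
    using assms by (intro power_mono exp_minus_ge) (auto simp: field_simps)
  also have "\<dots> = exp (real l * (- (1 / (2 * real M))))" by (simp only: exp_of_nat_mult)
  finally show ?thesis by simp
qed

lemma bad_bound:
  assumes "s + 3 \<le> j - r"
  shows "emeasure lborel (bad j r t s) \<le> ennreal (2 * exp (- real (2^(j-r-s-3))))"
proof -
  define l where "l = (2::nat)^(j-r)"
  define m where "m = (2::nat)^(j-r-s-3)"
  have l: "l = m * 2^(s+3)" unfolding l_def m_def using assms by (simp flip: power_add)
  have md: "l div 2^(s+3) = m" unfolding l by simp
  have "emeasure lborel (bad j r t s) \<le> ennreal (2 * 2^m * (1 - 1 / (2 * real ((2::nat)^s))) ^ card (blk l t))"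
    unfolding bad_def l_def[symmetric] md
    by (rule markov[where N="t*l+l"]) (auto simp: blk_def)
  also have "\<dots> \<le> ennreal (2 * exp (- real m))"
  proof (rule ennreal_leI)
    have "(1 - 1 / (2 * real ((2::nat)^s))) ^ card (blk l t) \<le> exp (- (real l / (2 * real ((2::nat)^s))))"
      using pow_exp_bound[of "2^s" l] by simp
    also have "real l / (2 * real ((2::nat)^s)) = 4 * real m"
      unfolding l by (simp add: power_add field_simps)
    finally have a: "(1 - 1 / (2 * real ((2::nat)^s))) ^ card (blk l t) \<le> exp (- (4 * real m))" .
    have b: "(2::real) ^ m \<le> exp (real m)"
    proof -
      have "(2::real) ^ m = exp (real m * ln 2)" by (simp add: exp_of_nat_mult)
      also have "\<dots> \<le> exp (real m)" using ln_2_less_1 by (simp add: mult_left_le)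
      finally show ?thesis .
    qed
    have "2 * 2^m * (1 - 1 / (2 * real ((2::nat)^s))) ^ card (blk l t) \<le> 2 * exp (real m) * exp (- (4 * real m))"
    proof -
      have "(1::real) \<le> 2^s" by (rule one_le_power) simp
      moreover have "real ((2::nat)^s) = 2^s" by simp
      ultimately have q: "(1::real) \<le> 2 * real ((2::nat)^s)" by linarith
      then have "1 / (2 * real ((2::nat)^s)) \<le> 1" by (simp add: divide_le_eq)
      then have nn: "0 \<le> (1 - 1 / (2 * real ((2::nat)^s))) ^ card (blk l t)" by simp
      show ?thesis using a b nn by (intro mult_mono) auto
    qed
    also have "\<dots> = 2 * exp (- (3 * real m))" by (simp add: mult.assoc flip: exp_add)
    also have "\<dots> \<le> 2 * exp (- real m)" by simp
    finally show "2 * 2^m * (1 - 1 / (2 * real ((2::nat)^s))) ^ card (blk l t) \<le> 2 * exp (- real m)" .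
  qed
  finally show ?thesis unfolding m_def .
qed

lemma Idx_sub: "Idx j \<subseteq> {..<DD j} \<times> {..<(2::nat)^DD j} \<times> {1..DD j}"
proof -
  have "t < 2^DD j" if "r < DD j" "t < 2^r" for r t :: nat
    using that by (meson order.strict_trans2 power_increasing_iff one_less_numeral_iff semiring_norm(76) less_imp_le)
  then show ?thesis unfolding Idx_def by auto
qed

lemma card_Idx: "card (Idx j) \<le> DD j * 2^DD j * DD j"
proof -
  have "card (Idx j) \<le> card ({..<DD j} \<times> {..<(2::nat)^DD j} \<times> {1..DD j})"
    by (rule card_mono[OF _ Idx_sub]) simp
  also have "\<dots> = DD j * 2^DD j * DD j" by (simp add: card_cartesian_product)
  finally show ?thesis .
qed

lemma EE_bound:
  assumes "2 * DD j + 3 \<le> j"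
  shows "emeasure lborel (EE j) \<le> ennreal (real (DD j * 2^DD j * DD j) * (2 * exp (- real ((2::nat)^(j - 2 * DD j - 2)))))"
proof -
  define \<mu> where "\<mu> = real ((2::nat)^(j - 2 * DD j - 2))"
  have fin: "finite (Idx j)" using Idx_sub by (rule finite_subset) auto
  have each: "emeasure lborel (bad j r t s) \<le> ennreal (2 * exp (- \<mu>))" if "(r,t,s) \<in> Idx j" for r t s
  proof -
    from that have rs: "r < DD j" "s \<le> DD j" "1 \<le> s" by (auto simp: Idx_def)
    then have ss: "s + 3 \<le> j - r" using assms by linarith
    have "j - 2 * DD j - 2 \<le> j - r - s - 3" using rs assms by linarith
    then have "\<mu> \<le> real ((2::nat)^(j-r-s-3))" unfolding \<mu>_def by (simp add: power_increasing)
    then have "2 * exp (- real ((2::nat)^(j-r-s-3))) \<le> 2 * exp (- \<mu>)" by simp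
    then show ?thesis using bad_bound[OF ss, of t] by (meson ennreal_leI order.trans)
  qed
  define Bf where "Bf = (\<lambda>(r,t,s). bad j r t s)"
  have sub: "Bf ` Idx j \<subseteq> sets lborel" unfolding Bf_def using bad_meas by auto
  have "emeasure lborel (EE j) = emeasure lborel (\<Union>i\<in>Idx j. Bf i)" unfolding EE_def Bf_def by simp
  also have "\<dots> \<le> (\<Sum>i\<in>Idx j. emeasure lborel (Bf i))"
    by (rule emeasure_subadditive_finite[OF fin sub])
  also have "\<dots> \<le> (\<Sum>i\<in>Idx j. ennreal (2 * exp (- \<mu>)))"
  proof (intro sum_mono)
    fix i assume "i \<in> Idx j"
    then show "emeasure lborel (Bf i) \<le> ennreal (2 * exp (- \<mu>))"
      using each unfolding Bf_def by (cases i) auto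
  qed
  also have "\<dots> = of_nat (card (Idx j)) * ennreal (2 * exp (- \<mu>))" by simp
  also have "\<dots> \<le> of_nat (DD j * 2^DD j * DD j) * ennreal (2 * exp (- \<mu>))"
    by (rule mult_right_mono, subst of_nat_le_iff, rule card_Idx, simp)
  also have "\<dots> = ennreal (real (DD j * 2^DD j * DD j) * (2 * exp (- \<mu>)))"
    by (simp add: ennreal_mult ennreal_of_nat_eq_real_of_nat)
  finally show ?thesis unfolding \<mu>_def .
qed


lemma EE_sub: "EE j \<subseteq> {0<..<1}" unfolding EE_def bad_def by auto

lemma EE_meas[measurable]: "EE j \<in> sets lborel"
proof -
  have fin: "finite (Idx j)" using Idx_sub by (rule finite_subset) auto
  have "EE j = (\<Union>i\<in>Idx j. (\<lambda>(r,t,s). bad j r t s) i)" unfolding EE_def by simp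
  also have "\<dots> \<in> sets lborel"
    by (rule sets.finite_UN[OF fin]) (use bad_meas in \<open>auto simp: case_prod_beta\<close>)
  finally show ?thesis .
qed

lemma EE_fin: "emeasure lborel (EE j) < \<infinity>"
proof -
  have "emeasure lborel (EE j) \<le> emeasure lborel {0<..<(1::real)}"
    by (rule emeasure_mono[OF EE_sub]) simp
  also have "\<dots> < \<infinity>" by simp
  finally show ?thesis .
qed

lemma asymp_aux:
  "eventually (\<lambda>j::nat. real j ^ 2 * 2 ^ j * (2 * exp (- (2 powr (3 * real j / 4 - 2)))) \<le> (1/2) ^ j) at_top"
  by real_asymp

lemma EE_measure_ev: "eventually (\<lambda>j. measure lborel (EE j) \<le> (1/2) ^ j) at_top"
  using asymp_aux eventually_ge_at_top[of 4]
proof eventually_elim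
  case (elim j)
  define D where "D = DD j"
  have D8: "8 * D \<le> j" unfolding D_def DD_def by simp
  then have jD: "2 * DD j + 3 \<le> j" using elim(2) unfolding D_def by linarith
  define X where "X = real (D * 2^D * D) * (2 * exp (- real ((2::nat)^(j - 2 * D - 2))))"
  have "emeasure lborel (EE j) \<le> ennreal X" using EE_bound[OF jD] unfolding X_def D_def .
  then have "measure lborel (EE j) \<le> X" unfolding measure_def
    by (rule enn2real_leI[rotated]) (simp add: X_def)
  also have "X \<le> real j ^ 2 * 2 ^ j * (2 * exp (- (2 powr (3 * real j / 4 - 2))))"
  proof -
    have Dj: "D \<le> j" using D8 by linarith
    have a: "real (D * 2^D * D) \<le> real j ^ 2 * 2 ^ j"
    proof -
      have "D * 2^D * D \<le> j * 2^j * j"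
        using Dj by (intro mult_mono power_increasing) auto
      then have "real (D * 2^D * D) \<le> real (j * 2^j * j)" by (simp only: of_nat_le_iff)
      then show ?thesis by (simp add: power2_eq_square mult_ac)
    qed
    have "3 * real j / 4 - 2 \<le> real (j - 2 * D - 2)" using D8 by linarith
    then have "2 powr (3 * real j / 4 - 2) \<le> 2 powr real (j - 2 * D - 2)" by (rule powr_mono) simp
    also have "\<dots> = real ((2::nat)^(j - 2 * D - 2))" by (simp add: powr_realpow)
    finally have b: "exp (- real ((2::nat)^(j - 2 * D - 2))) \<le> exp (- (2 powr (3 * real j / 4 - 2)))" by simp
    show ?thesis unfolding X_def using a b by (intro mult_mono) auto
  qed
  also have "\<dots> \<le> (1/2) ^ j" using elim(1) .
  finally show ?case .
qed

lemma good_AE: "AE x in lborel. eventually (\<lambda>j. x \<notin> EE j) sequentially"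
proof -
  have "summable (\<lambda>j. measure lborel (EE j))"
  proof (rule summable_comparison_test_ev)
    show "eventually (\<lambda>j. norm (measure lborel (EE j)) \<le> (1/2) ^ j) sequentially"
      using EE_measure_ev by (simp add: measure_nonneg)
    show "summable (\<lambda>j. (1/2::real) ^ j)" by (rule summable_geometric) simp
  qed
  from borel_cantelli_AE1[of EE lborel, OF EE_meas EE_fin this]
  show ?thesis by (rule AE_mp) (intro AE_I2 impI, auto elim: eventually_mono)
qed

lemma digit_dyadic: "(\<Sum>s\<in>{1..D}. 2^(s-1) * (if 2^s \<le> a then 1 else 0)) \<le> (a::nat) \<and>
    (\<Sum>s\<in>{1..D}. 2^(s-1) * (if 2^s \<le> a then 1 else 0)) < (2::nat)^D"
proof (induction D)
  case 0
  then show ?case by simp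
next
  case (Suc D)
  have eq: "(\<Sum>s\<in>{1..Suc D}. 2^(s-1) * (if 2^s \<le> a then 1 else 0)) =
      (\<Sum>s\<in>{1..D}. 2^(s-1) * (if 2^s \<le> a then 1 else 0)) + 2^D * (if 2^Suc D \<le> a then 1 else (0::nat))"
    by simp
  show ?case
  proof (cases "2^Suc D \<le> a")
    case True
    then show ?thesis unfolding eq using Suc.IH by auto
  next
    case False
    then show ?thesis unfolding eq using Suc.IH by (auto intro: less_le_trans)
  qed
qed

lemma block_sum:
  assumes x: "x \<in> {0<..<1}" "x \<notin> EE j" and jD: "2 * DD j + 3 \<le> j"
    and r: "r < DD j" and t: "t < 2^r"
  shows "DD j * 2^(j-r-4) \<le> (\<Sum>i\<in>blk (2^(j-r)) t. cf_digit x i)"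
proof -
  define B where "B = blk (2^(j-r)) t"
  have fin: "finite B" by (simp add: B_def blk_def)
  have cnt_ge: "2^(j-r-4) \<le> 2^(s-1) * cnt x B (2^s)" if s: "s \<in> {1..DD j}" for s
  proof -
    have "(r,t,s) \<in> Idx j" using r t s by (simp add: Idx_def)
    then have "x \<notin> bad j r t s" using x(2) unfolding EE_def by blast
    then have c: "2^(j-r) div 2^(s+3) \<le> cnt x B (2^s)" using x(1) unfolding bad_def B_def by auto
    have sj: "s + 3 \<le> j - r" using s r jD by auto
    have "(2::nat)^(j-r) = 2^(j-r-s-3) * 2^(s+3)" using sj by (simp flip: power_add)
    then have "(2::nat)^(j-r) div 2^(s+3) = 2^(j-r-s-3)" by simp
    then have c': "2^(j-r-s-3) \<le> cnt x B (2^s)" using c by simp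
    have "(2::nat)^(j-r-4) = 2^(s-1) * 2^(j-r-s-3)"
      using sj s by (simp flip: power_add)
    also have "\<dots> \<le> 2^(s-1) * cnt x B (2^s)" using c' by simp
    finally show ?thesis .
  qed
  have "DD j * 2^(j-r-4) = (\<Sum>s\<in>{1..DD j}. 2^(j-r-4::nat))" by simp
  also have "\<dots> \<le> (\<Sum>s\<in>{1..DD j}. 2^(s-1) * cnt x B (2^s))" by (rule sum_mono) (rule cnt_ge)
  also have "\<dots> = (\<Sum>s\<in>{1..DD j}. \<Sum>i\<in>B. 2^(s-1) * (if 2^s \<le> cf_digit x i then 1 else 0))"
  proof (rule sum.cong[OF refl])
    fix s
    have "cnt x B (2^s) = (\<Sum>i\<in>B. if 2^s \<le> cf_digit x i then 1 else (0::nat))"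
      unfolding cnt_def card_eq_sum using fin by (subst sum.inter_filter) auto
    then show "2^(s-1) * cnt x B (2^s) = (\<Sum>i\<in>B. 2^(s-1) * (if 2^s \<le> cf_digit x i then 1 else 0))"
      by (simp add: sum_distrib_left)
  qed
  also have "\<dots> = (\<Sum>i\<in>B. \<Sum>s\<in>{1..DD j}. 2^(s-1) * (if 2^s \<le> cf_digit x i then 1 else 0))"
    by (rule sum.swap)
  also have "\<dots> \<le> (\<Sum>i\<in>B. cf_digit x i)"
    by (rule sum_mono) (use digit_dyadic in blast)
  finally show ?thesis unfolding B_def .
qed


lemma esym_lower:
  fixes a :: "nat \<Rightarrow> real" and B :: "nat \<Rightarrow> nat set"
  assumes a: "\<And>i. 0 \<le> a i" and Bsub: "\<And>t. t < k \<Longrightarrow> B t \<subseteq> {1..n}"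
    and disj: "\<And>t t'. t < k \<Longrightarrow> t' < k \<Longrightarrow> t \<noteq> t' \<Longrightarrow> B t \<inter> B t' = {}"
  shows "(\<Prod>t<k. \<Sum>i\<in>B t. a i) \<le> (\<Sum>I\<in>{I. I \<subseteq> {1..n} \<and> card I = k}. \<Prod>i\<in>I. a i)"
proof -
  define P where "P = PiE {..<k} B"
  define K where "K = {I. I \<subseteq> {1..n} \<and> card I = k}"
  have finB: "finite (B t)" if "t < k" for t using Bsub[OF that] finite_subset by blast
  have injg: "inj_on g {..<k}" if "g \<in> P" for g
  proof (rule inj_onI)
    fix t t' assume tt: "t \<in> {..<k}" "t' \<in> {..<k}" "g t = g t'"
    show "t = t'"
    proof (rule ccontr)
      assume "t \<noteq> t'"
      then have "B t \<inter> B t' = {}" using disj tt by auto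
      moreover have "g t \<in> B t" "g t' \<in> B t'" using that tt(1,2) unfolding P_def by (auto simp: PiE_iff)
      ultimately show False using tt by auto
    qed
  qed
  have injP: "inj_on (\<lambda>g. g ` {..<k}) P"
  proof (rule inj_onI)
    fix g h assume g: "g \<in> P" and h: "h \<in> P" and eq: "g ` {..<k} = h ` {..<k}"
    show "g = h"
    proof (rule PiE_ext[OF g[unfolded P_def] h[unfolded P_def]])
      fix t assume t: "t \<in> {..<k}"
      then have "g t \<in> h ` {..<k}" using eq by blast
      then obtain t' where t': "t' < k" "g t = h t'" by auto
      have "t = t'"
      proof (rule ccontr)
        assume "t \<noteq> t'"
        then have "B t \<inter> B t' = {}" using disj t t' by auto
        moreover have "g t \<in> B t" "h t' \<in> B t'" using g h t t'(1) unfolding P_def by (auto simp: PiE_iff)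
        ultimately show False using t' by auto
      qed
      then show "g t = h t" using t' by simp
    qed
  qed
  have "(\<Prod>t<k. \<Sum>i\<in>B t. a i) = (\<Sum>g\<in>P. \<Prod>t<k. a (g t))"
    unfolding P_def by (rule prod_sum_PiE) (auto intro: finB)
  also have "\<dots> = (\<Sum>g\<in>P. \<Prod>i\<in>g ` {..<k}. a i)"
    by (rule sum.cong[OF refl]) (simp add: prod.reindex[OF injg])
  also have "\<dots> = (\<Sum>I\<in>(\<lambda>g. g ` {..<k}) ` P. \<Prod>i\<in>I. a i)"
    by (rule sum.reindex[OF injP, symmetric, unfolded comp_def])
  also have "\<dots> \<le> (\<Sum>I\<in>K. \<Prod>i\<in>I. a i)"
  proof (rule sum_mono2)
    have "K \<subseteq> Pow {1..n}" unfolding K_def by auto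
    then show "finite K" by (rule finite_subset) simp
    show "(\<lambda>g. g ` {..<k}) ` P \<subseteq> K"
    proof
      fix I assume "I \<in> (\<lambda>g. g ` {..<k}) ` P"
      then obtain g where g: "g \<in> P" "I = g ` {..<k}" by auto
      have "g ` {..<k} \<subseteq> {1..n}" using g(1) Bsub unfolding P_def by (auto simp: PiE_iff)
      moreover have "card (g ` {..<k}) = k" using card_image[OF injg[OF g(1)]] by simp
      ultimately show "I \<in> K" unfolding K_def g(2) by simp
    qed
    show "0 \<le> (\<Prod>i\<in>I. a i)" for I using a by (simp add: prod_nonneg)
  qed
  finally show ?thesis unfolding K_def .
qed

lemma fact_lower: "(real k / exp 1) ^ k \<le> fact k"
proof -
  have s: "(\<lambda>n. real k ^ n /\<^sub>R fact n) sums exp (real k)" by (rule exp_converges)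
  have "real k ^ k /\<^sub>R fact k \<le> exp (real k)"
    using sum_le_suminf[OF sums_summable[OF s], of "{k}"] sums_unique[OF s] by simp
  then have "real k ^ k / fact k \<le> exp (real k)" by (simp add: divide_inverse mult.commute)
  then have "real k ^ k \<le> exp (real k) * fact k" by (simp add: divide_le_eq)
  moreover have "exp (real k) = exp 1 ^ k" using exp_of_nat_mult[of k 1] by simp
  ultimately show ?thesis by (simp add: power_divide divide_le_eq mult.commute)
qed

lemma choose_le: "real (n choose k) \<le> real n ^ k / fact k"
proof -
  have "(n choose k) * fact k \<le> n ^ k" by (rule binomial_fact_pow)
  then have "real (n choose k) * fact k \<le> real n ^ k"
    by (metis of_nat_fact of_nat_le_iff of_nat_mult of_nat_power)
  then show ?thesis by (simp add: le_divide_eq)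
qed


lemma aux1: "eventually (\<lambda>j. 2 * (real j + 1) < 2 ^ DD j) sequentially"
proof -
  have "eventually (\<lambda>j::nat. 2 * (real j + 1) < 2 powr (real j / 8 - 1)) sequentially" by real_asymp
  then show ?thesis
  proof eventually_elim
    case (elim j)
    have "real j / 8 - 1 \<le> real (DD j)" unfolding DD_def by linarith
    then have "2 powr (real j / 8 - 1) \<le> 2 powr real (DD j)" by (rule powr_mono) simp
    also have "\<dots> = 2 ^ DD j" by (simp add: powr_realpow)
    finally show ?case using elim by linarith
  qed
qed

lemma aux2: "eventually (\<lambda>j. Z \<le> real (DD j)) sequentially"
proof -
  have "filterlim (\<lambda>j::nat. real j / 8 - 1) at_top sequentially" by real_asymp
  then have "eventually (\<lambda>j::nat. Z \<le> real j / 8 - 1) sequentially" by (simp add: filterlim_at_top)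
  then show ?thesis
  proof eventually_elim
    case (elim j)
    have "real j / 8 - 1 \<le> real (DD j)" unfolding DD_def by linarith
    then show ?case using elim by linarith
  qed
qed

lemma blk_disj: "t \<noteq> t' \<Longrightarrow> blk l t \<inter> blk l t' = {}"
proof -
  have *: "blk l t \<inter> blk l t' = {}" if "t < t'" for t t'
  proof -
    have "t * l + l \<le> t' * l" using that by (metis Suc_leI add.commute mult_Suc mult_le_mono1)
    then show ?thesis unfolding blk_def by auto
  qed
  assume "t \<noteq> t'"
  then show ?thesis using *[of t t'] *[of t' t] by (cases "t < t'") (auto simp: Int_commute)
qed

lemma main_bound:
  assumes x: "x \<in> {0<..<1}" "x \<notin> EE j" and j4: "4 \<le> j"
    and k1: "1 \<le> k" and kD: "2 * k < 2 ^ DD j" and n: "2^j \<le> n" "n < 2^(j+1)"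
  shows "(real (DD j) / 192) ^ k \<le> sym_mean x n k"
proof -
  define D where "D = DD j"
  define r where "r = ceillog2 k"
  have kr: "k \<le> 2^r" unfolding r_def by (rule le_two_power_ceillog2)
  have rk: "2^r < 2 * k" unfolding r_def using k1 by (intro two_power_ceillog2_gt) simp
  have "(2::nat)^r < 2^D" using rk kD unfolding D_def by linarith
  then have rD: "r < D" by (rule power_less_imp_less_exp[rotated]) simp
  have jD: "2 * DD j + 3 \<le> j" using j4 unfolding DD_def by linarith
  have rj: "r + 4 \<le> j" using rD jD unfolding D_def by linarith
  define l where "l = (2::nat)^(j-r)"
  define Y where "Y = real (D * 2^(j-r-4))"
  define K where "K = {I. I \<subseteq> {1..n} \<and> card I = k}"
  define E where "E = (\<Sum>I\<in>K. \<Prod>i\<in>I. real (cf_digit x i))"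
  have lk: "k * l \<le> n"
  proof -
    have "k * l \<le> 2^r * 2^(j-r)" unfolding l_def using kr by simp
    also have "\<dots> = 2^j" using rj by (simp flip: power_add)
    finally show ?thesis using n by simp
  qed
  have Bsub: "blk l t \<subseteq> {1..n}" if "t < k" for t
  proof -
    have "t * l + l \<le> k * l" using that by (metis Suc_leI add.commute mult_Suc mult_le_mono1)
    then show ?thesis using lk unfolding blk_def by auto
  qed
  have sig: "Y \<le> (\<Sum>i\<in>blk l t. real (cf_digit x i))" if "t < k" for t
  proof -
    have tr: "t < 2^r" using that kr by simp
    have "D * 2^(j-r-4) \<le> (\<Sum>i\<in>blk l t. cf_digit x i)"
      using block_sum[OF x jD _ tr] rD unfolding D_def l_def by simp
    then show ?thesis unfolding Y_def by (metis of_nat_le_iff of_nat_sum)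
  qed
  have Y0: "0 \<le> Y" by (simp add: Y_def)
  have "Y ^ k = (\<Prod>t<k. Y)" by simp
  also have "\<dots> \<le> (\<Prod>t<k. \<Sum>i\<in>blk l t. real (cf_digit x i))"
    by (rule prod_mono) (use Y0 sig in auto)
  also have "\<dots> \<le> E" unfolding E_def K_def
    by (rule esym_lower, simp, rule Bsub, assumption, rule blk_disj, assumption)
  finally have YE: "Y ^ k \<le> E" .
  have "1 \<le> l" unfolding l_def by simp
  then have "k \<le> k * l" by simp
  then have kn: "k \<le> n" using lk by linarith
  have C0: "0 < real (n choose k)" using kn by simp
  have Cle: "real (n choose k) \<le> real n ^ k / fact k" by (rule choose_le)
  have "(0::nat) < 2^j" by simp
  then have "0 < n" using n(1) by linarith
  then have npos: "0 < real n" by simp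
  have "sym_mean x n k = E / real (n choose k)" unfolding sym_mean_def E_def K_def by simp
  also have "\<dots> \<ge> Y ^ k / real (n choose k)" using YE C0 by (simp add: divide_right_mono)
  finally have s1: "Y ^ k / real (n choose k) \<le> sym_mean x n k" .
  have "Y ^ k / (real n ^ k / fact k) \<le> Y ^ k / real (n choose k)"
  proof (rule divide_left_mono[OF Cle])
    show "0 \<le> Y ^ k" using Y0 by simp
    show "0 < real n ^ k / fact k * real (n choose k)" using npos C0 by (intro mult_pos_pos divide_pos_pos) auto
  qed
  also have "Y ^ k / (real n ^ k / fact k) = (Y / real n) ^ k * fact k"
    by (simp add: power_divide)
  finally have s2: "(Y / real n) ^ k * fact k \<le> sym_mean x n k" using s1 by linarith
  have "(Y / real n) ^ k * (real k / exp 1) ^ k \<le> (Y / real n) ^ k * fact k"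
    using fact_lower Y0 npos by (intro mult_left_mono) auto
  also have "(Y / real n) ^ k * (real k / exp 1) ^ k = (Y * real k / (exp 1 * real n)) ^ k"
    by (simp add: power_mult_distrib[symmetric] mult_ac)
  finally have s3: "(Y * real k / (exp 1 * real n)) ^ k \<le> sym_mean x n k" using s2 by linarith
  have ratio: "real D / 192 \<le> Y * real k / (exp 1 * real n)"
  proof -
    define P where "P = (2::real)^(j-4)"
    have P1: "(2::real)^(j-r-4) * 2^r = P" unfolding P_def using rj by (simp flip: power_add)
    have "j + 1 = (j - 4) + 5" using j4 by simp
    then have "(2::real)^(j+1) = 2^(j-4) * 2^5" by (simp only: power_add)
    then have P2: "(2::real)^(j+1) = 32 * P" unfolding P_def by simp
    have h1: "real D * P * 96 \<le> 192 * Y * real k"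
    proof -
      have "2^r \<le> 2 * k" using rk by simp
      then have "real (2^r) \<le> real (2 * k)" by (simp only: of_nat_le_iff)
      then have "(2::real)^r \<le> 2 * real k" by simp
      then have "real D * 2^(j-r-4) * 2^r \<le> real D * 2^(j-r-4) * (2 * real k)"
        by (intro mult_left_mono) auto
      then show ?thesis unfolding Y_def using P1 by (simp add: mult_ac)
    qed
    have h2: "exp 1 * real n \<le> P * 96"
    proof -
      have "n \<le> 2^(j+1)" using n by simp
      then have "real n \<le> real (2^(j+1))" by (simp only: of_nat_le_iff)
      then have "real n \<le> 2^(j+1)" by simp
      then have "exp 1 * real n \<le> 3 * 2^(j+1)" using exp_le by (intro mult_mono) auto
      then show ?thesis using P2 by simp
    qed
    have "real D * (exp 1 * real n) \<le> real D * (P * 96)" using h2 by (intro mult_left_mono) auto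
    then have "real D * (exp 1 * real n) \<le> 192 * (Y * real k)" using h1 by (simp add: mult_ac)
    moreover have "0 < exp 1 * real n" using npos by simp
    ultimately show ?thesis by (simp add: divide_le_eq le_divide_eq mult_ac)
  qed
  have "(real D / 192) ^ k \<le> (Y * real k / (exp 1 * real n)) ^ k"
    using ratio by (intro power_mono) auto
  then show ?thesis using s3 unfolding D_def by linarith
qed


theorem theorem1p1:
  fixes f :: "nat \<Rightarrow> nat"
  assumes f_pos: "\<And>n. f n \<ge> 1"
    and f_small: "(\<lambda>n. real (f n)) \<in> o(\<lambda>n. ln (ln (real n)))"
  shows "AE \<alpha> in lborel. \<alpha> \<in> {0<..<1} \<and> \<alpha> \<notin> \<rat> \<longrightarrow>
           filterlim (\<lambda>n. sym_mean \<alpha> n (f n) powr (1 / real (f n))) at_top sequentially"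
proof -
  have fs: "eventually (\<lambda>n. real (f n) \<le> 1 * norm (ln (ln (real n)))) sequentially"
    using landau_o.smallD[OF f_small zero_less_one] by simp
  have key: "filterlim (\<lambda>n. sym_mean \<alpha> n (f n) powr (1 / real (f n))) at_top sequentially"
    if \<alpha>: "\<alpha> \<in> {0<..<1}" and ev: "eventually (\<lambda>j. \<alpha> \<notin> EE j) sequentially" for \<alpha>
  proof (subst filterlim_at_top, intro allI)
    fix Z :: real
    have "eventually (\<lambda>j. \<alpha> \<notin> EE j \<and> 4 \<le> j \<and> 2 * (real j + 1) < 2 ^ DD j \<and> 192 * Z \<le> real (DD j)) sequentially"
      using ev eventually_ge_at_top[of 4] aux1 aux2[of "192 * Z"] by eventually_elim auto
    then obtain J where J: "\<And>j. J \<le> j \<Longrightarrow> \<alpha> \<notin> EE j \<and> 4 \<le> j \<and> 2 * (real j + 1) < 2 ^ DD j \<and> 192 * Z \<le> real (DD j)"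
      by (auto simp: eventually_sequentially)
    show "eventually (\<lambda>n. Z \<le> sym_mean \<alpha> n (f n) powr (1 / real (f n))) sequentially"
      using fs eventually_ge_at_top[of "max (2^J) 3"]
    proof eventually_elim
      case (elim n)
      have n3: "3 \<le> n" and nJ: "2^J \<le> n" using elim(2) by auto
      define j where "j = floorlog 2 n - 1"
      have fl: "2 ^ (floorlog 2 n - 1) \<le> n \<and> n < 2 ^ floorlog 2 n" using floorlog_bounds[of n 2] n3 by simp
      have fl1: "1 \<le> floorlog 2 n"
      proof (rule ccontr)
        assume "\<not> 1 \<le> floorlog 2 n"
        then have "floorlog 2 n = 0" by simp
        then show False using fl n3 by simp
      qed
      then have nj: "2^j \<le> n" "n < 2^(j+1)" using fl unfolding j_def by auto
      have Jj: "J \<le> j"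
      proof -
        have p: "(2::nat)^J < 2^(j+1)" using nJ nj by simp
        have "J < j + 1" by (rule power_less_imp_less_exp[OF _ p]) simp
        then show ?thesis by simp
      qed
      note Jp = J[OF Jj]
      define k where "k = f n"
      have k1: "1 \<le> k" unfolding k_def by (rule f_pos)
      have klt: "real k < real j + 1"
      proof -
        have "ln 3 \<le> ln (real n)" using n3 by simp
        moreover have "1 \<le> ln (3::real)"
        proof -
          have "exp 1 \<le> (3::real)" by (rule exp_le)
          then have "ln (exp 1) \<le> ln (3::real)" by (subst ln_le_cancel_iff) auto
          then show ?thesis by simp
        qed
        ultimately have L1: "1 \<le> ln (real n)" by linarith
        then have "0 \<le> ln (ln (real n))" by simp
        moreover have "ln (ln (real n)) \<le> ln (real n) - 1" using L1 by (intro ln_le_minus_one) simp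
        ultimately have a: "real k \<le> ln (real n) - 1" using elim(1) unfolding k_def by simp
        have rn: "real n < 2 ^ (j+1)" using nj(2) by (metis of_nat_less_iff of_nat_numeral of_nat_power)
        have "ln (real n) < ln (2 ^ (j+1))" using rn n3 by simp
        also have "\<dots> = real (j+1) * ln 2" by (rule ln_realpow)
        also have "\<dots> \<le> real (j+1) * 1" using ln_2_less_1 by (intro mult_left_mono) auto
        finally show ?thesis using a by simp
      qed
      have kD: "2 * k < 2 ^ DD j"
      proof -
        have "real (2 * k) < 2 ^ DD j" using klt Jp by simp
        then show ?thesis by (metis of_nat_less_iff of_nat_numeral of_nat_power)
      qed
      have mb: "(real (DD j) / 192) ^ k \<le> sym_mean \<alpha> n k"
        by (rule main_bound[OF \<alpha> _ _ k1 kD nj]) (use Jp in auto)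
      have D1: "1 \<le> DD j"
      proof (rule ccontr)
        assume "\<not> 1 \<le> DD j"
        then have "DD j = 0" by simp
        then show False using kD k1 by simp
      qed
      define a where "a = real (DD j) / 192"
      have pos: "0 < a" unfolding a_def using D1 by simp
      have "a = (a ^ k) powr (1 / real k)"
      proof -
        have "a ^ k = a powr real k" using pos by (simp add: powr_realpow)
        then show ?thesis using k1 pos by (simp add: powr_powr)
      qed
      also have "\<dots> \<le> sym_mean \<alpha> n k powr (1 / real k)"
        by (rule powr_mono2) (use mb pos in \<open>auto simp: a_def\<close>)
      finally have "a \<le> sym_mean \<alpha> n k powr (1 / real k)" .
      moreover have "Z \<le> a" using Jp unfolding a_def by simp
      ultimately show ?case unfolding k_def by linarith
    qed
  qed
  show ?thesis using good_AE by (rule AE_mp) (intro AE_I2 impI, auto intro: key)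
qed


end
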